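(* Let $A\in\mathbb{C}^{m\times n}$, $B\in\mathbb{C}^{n\times p}$, $C\in\mathbb{C}^{p\times q}$ and $M=ABC$. Then each of the following sets is contained in $\{M^{(1)}\}$: $\{(A^{(1)}M)^{(1)}A^{(1)}\}$, $\{C^{(1)}(MC^{(1)})^{(1)}\}$, $\{(A^{*}M)^{(1)}A^{*}\}$, $\{C^{*}(MC^{*})^{(1)}\}$, $\{(AA^{*}M)^{(1)}AA^{*}\}$, $\{C^{*}C(MC^{*}C)^{(1)}\}$, $\{C^{(1)}(A^{(1)}MC^{(1)})^{(1)}A^{(1)}\}$, $\{C^{*}(A^{*}MC^{*})^{(1)}A^{*}\}$, $\{[(AB)^{(1)}M]^{(1)}(AB)^{(1)}\}$, $\{(BC)^{(1)}[M(BC)^{(1)}]^{(1)}\}$, $\{[(AB)^{*}M]^{(1)}(AB)^{*}\}$, $\{(BC)^{*}[M(BC)^{*}]^{(1)}\}$, $\{[(ABB^{(1)})^{(1)}M]^{(1)}(ABB^{(1)})^{(1)}\}$, $\{(B^{(1)}BC)^{(1)}[M(B^{(1)}BC)^{(1)}]^{(1)}\}$, $\{[(ABB^{*})^{(1)}M]^{(1)}(ABB^{*})^{(1)}\}$, $\{(B^{*}BC)^{(1)}[M(B^{*}BC)^{(1)}]^{(1)}\}$, $\{C^{*}C(AA^{*}MC^{*}C)^{(1)}AA^{*}\}$, $\{(BC)^{(1)}[(AB)^{(1)}M(BC)^{(1)}]^{(1)}(AB)^{(1)}\}$, $\{(BC)^{*}[(AB)^{*}M(BC)^{*}]^{(1)}(AB)^{*}\}$,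 $\{(B^{(1)}BC)^{(1)}[(ABB^{(1)})^{(1)}M(B^{(1)}BC)^{(1)}]^{(1)}(ABB^{(1)})^{(1)}\}$, $\{(B^{*}BC)^{(1)}[(ABB^{*})^{(1)}M(B^{*}BC)^{(1)}]^{(1)}(ABB^{*})^{(1)}\}$, $\{(B^{(1)}BC)^{*}[(ABB^{(1)})^{*}M(B^{(1)}BC)^{*}]^{(1)}(ABB^{(1)})^{*}\}$, $\{(B^{*}BC)^{*}[(ABB^{*})^{*}M(B^{*}BC)^{*}]^{(1)}(ABB^{*})^{*}\}$.
   Context: For a complex matrix $X$, $X^*$ is its conjugate transpose. For $X\in\mathbb{C}^{p\times q}$, a matrix $G\in\mathbb{C}^{q\times p}$ is called an $\{i,\ldots,j\}$-generalized inverse of $X$ (written $X^{(i,\ldots,j)}$) if it satisfies the equations numbered $i,\ldots,j$ among the four Penrose equations (i) $XGX=X$, (ii) $GXG=G$, (iii) $(XG)^*=XG$, (iv) $(GX)^*=GX$; $\{X^{(i,\ldots,j)}\}$ denotes the set of all such $G$. For a matrix expression involving generalized inverses, $\{\cdot\}$ denotes the set of all values of the expression as each generalized inverse occurring in it ranges over all admissible choices; repeated occurrences of the same symbol (e.g. $(AB)^{(1)}$ appearing twice) denote one and the same choice, and a generalized inverse of a matrix that itself contains a chosen generalized inverse is taken with respect to that chosen matrix. *)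

theory Defs
  imports "HOL-Analysis.Analysis"
begin

definition ctrans :: "complex^'n^'m \<Rightarrow> complex^'m^'n" where
  "ctrans X = (\<chi> i j. cnj (X $ j $ i))"

definition g1 :: "complex^'n^'m \<Rightarrow> (complex^'m^'n) set" where
  "g1 X = {G. X ** G ** X = X}"

end

theory Submission
  imports Defs
begin


lemma g1_ex: fixes N :: "complex^'n^'m" shows "\<exists>G. N ** G ** N = N"
proof -
  let ?f = "\<lambda>x::complex^'n. N *v x"
  have vp: "vector_space_pair ((*s) :: complex \<Rightarrow> complex^'n \<Rightarrow> _) ((*s) :: complex \<Rightarrow> complex^'m \<Rightarrow> _)"
    by unfold_locales
  have lf: "Vector_Spaces.linear (*s) (*s) ?f" by simp
  obtain g where g: "Vector_Spaces.linear (*s) (*s) g" "\<forall>v\<in>?f ` UNIV. ?f (g v) = v"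
    using vector_space_pair.linear_exists_right_inverse_on[OF vp lf vec.subspace_UNIV] by blast
  have gm: "(\<lambda>y. matrix g *v y) = g" using g(1) by simp
  have "N ** matrix g ** N = N"
    unfolding matrix_eq
  proof
    fix x
    have "(N ** matrix g ** N) *v x = N *v (matrix g *v (N *v x))" by (simp add: matrix_vector_mul_assoc matrix_mul_assoc)
    also have "\<dots> = N *v (g (N *v x))" using gm by metis
    also have "\<dots> = N *v x" using g(2) by blast
    finally show "(N ** matrix g ** N) *v x = N *v x" .
  qed
  then show ?thesis by blast
qed

lemma ctrans_mult: "ctrans (X ** Y) = ctrans Y ** ctrans X"
  by (simp add: ctrans_def matrix_matrix_mult_def vec_eq_iff mult.commute)

lemma ctrans_ctrans[simp]: "ctrans (ctrans X) = X"
  by (simp add: ctrans_def vec_eq_iff)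

lemma ctrans_diff: "ctrans (X - Y) = ctrans X - ctrans Y"
  by (simp add: ctrans_def vec_eq_iff)

lemma mult_diff_left: "(X - Y) ** (Z::'a::ring_1^_^_) = X ** Z - Y ** Z"
  by (simp add: matrix_matrix_mult_def vec_eq_iff sum_subtractf algebra_simps)

lemma mult_diff_right: "(Z::'a::ring_1^_^_) ** (X - Y) = Z ** X - Z ** Y"
  by (simp add: matrix_matrix_mult_def vec_eq_iff sum_subtractf algebra_simps)

lemma ctrans_zero:
  fixes E :: "complex^'n^'m"
  assumes "ctrans E ** E = 0" shows "E = 0"
proof -
  have cn: "\<And>z. cnj z * z = complex_of_real ((cmod z)^2)" by (metis complex_norm_square mult.commute)
  have "E $ k $ j = 0" for k j
  proof -
    have "(\<Sum>i\<in>UNIV. cnj (E $ i $ j) * E $ i $ j) = 0"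
      using assms by (simp add: ctrans_def matrix_matrix_mult_def vec_eq_iff)
    hence "(\<Sum>i\<in>UNIV. complex_of_real ((cmod (E $ i $ j))^2)) = 0"
      using cn by simp
    hence "(\<Sum>i\<in>UNIV. (cmod (E $ i $ j))^2) = 0"
      by (simp only: of_real_sum[symmetric] of_real_eq_0_iff)
    hence "\<forall>i\<in>UNIV. (cmod (E $ i $ j))^2 = 0"
      by (subst sum_nonneg_eq_0_iff[symmetric]) auto
    thus ?thesis by simp
  qed
  thus ?thesis by (simp add: vec_eq_iff)
qed

lemma lsq: fixes A :: "complex^'n^'m" shows "\<exists>S. S ** (ctrans A ** A) = A"
proof -
  define Y where "Y = ctrans A ** A"
  obtain G where G: "Y ** G ** Y = Y" using g1_ex by blast
  have cY: "ctrans Y = Y" by (simp add: Y_def ctrans_mult)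
  define P where "P = A ** G ** Y"
  have cP: "ctrans P = Y ** ctrans G ** ctrans A" by (simp add: P_def ctrans_mult cY matrix_mul_assoc)
  have YG'Y: "Y ** ctrans G ** Y = Y"
    using arg_cong[OF G, of ctrans] by (simp add: ctrans_mult cY matrix_mul_assoc)
  have e1: "ctrans A ** P = Y" by (metis G P_def Y_def matrix_mul_assoc)
  have e2: "ctrans P ** A = Y" by (metis YG'Y Y_def cP matrix_mul_assoc)
  have e3: "ctrans P ** P = Y" by (metis G P_def e2 matrix_mul_assoc)
  have "ctrans (P - A) ** (P - A) = 0"
    using Y_def by (simp only: ctrans_diff mult_diff_left mult_diff_right e1 e2 e3 diff_self)
  hence "P - A = 0" by (rule ctrans_zero)
  hence "(A ** G) ** Y = A" by (simp add: P_def)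
  thus ?thesis unfolding Y_def by blast
qed

lemma rsq: fixes A :: "complex^'n^'m" shows "\<exists>T. A ** ctrans A ** T = A"
proof -
  obtain S where "S ** (ctrans (ctrans A) ** ctrans A) = ctrans A" using lsq by blast
  hence "ctrans (S ** (A ** ctrans A)) = A" by simp
  hence "A ** ctrans A ** ctrans S = A" by (simp add: ctrans_mult matrix_mul_assoc)
  thus ?thesis by blast
qed

lemma lsq2: fixes A :: "complex^'n^'m" shows "\<exists>S. S ** (A ** ctrans A) ** A = A"
proof -
  define Y where "Y = ctrans A ** A"
  have cY: "ctrans Y = Y" by (simp add: Y_def ctrans_mult)
  obtain W where W: "W ** (ctrans Y ** Y) = Y" using lsq by blast
  obtain S0 where S0: "S0 ** Y = A" using lsq unfolding Y_def by blast
  have "(S0 ** W ** ctrans A) ** (A ** ctrans A) ** A = S0 ** (W ** (Y ** Y))"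
    by (simp add: Y_def matrix_mul_assoc)
  also have "\<dots> = A" using W S0 cY by simp
  finally show ?thesis by blast
qed

lemma rsq2: fixes A :: "complex^'n^'m" shows "\<exists>T. A ** (ctrans A ** A) ** T = A"
proof -
  obtain S where "S ** (ctrans A ** ctrans (ctrans A)) ** ctrans A = ctrans A" using lsq2 by blast
  hence "ctrans (S ** (ctrans A ** A) ** ctrans A) = A" by simp
  hence "A ** (ctrans A ** A) ** ctrans S = A" by (simp add: ctrans_mult matrix_mul_assoc)
  thus ?thesis by blast
qed

lemma main2:
  assumes "X \<in> g1 (L ** M ** R)" "\<exists>S. S ** L ** M = M" "\<exists>T. M ** R ** T = M"
  shows "R ** X ** L \<in> g1 M"
proof -
  obtain S T where S: "S ** L ** M = M" and T: "M ** R ** T = M" using assms by blast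
  have X: "L ** M ** R ** X ** (L ** M ** R) = L ** M ** R" using assms(1) by (simp add: g1_def)
  have "M ** (R ** X ** L) ** M = S ** (L ** M ** R ** X ** (L ** M ** R)) ** T"
    by (metis S T matrix_mul_assoc)
  also have "\<dots> = M" by (metis X S T matrix_mul_assoc)
  finally show ?thesis by (simp add: g1_def)
qed

lemma mainL:
  assumes "X \<in> g1 (L ** M)" "\<exists>S. S ** L ** M = M"
  shows "X ** L \<in> g1 M"
proof -
  obtain S where S: "S ** L ** M = M" using assms by blast
  have X: "L ** M ** X ** (L ** M) = L ** M" using assms(1) by (simp add: g1_def)
  have "M ** (X ** L) ** M = S ** (L ** M ** X ** (L ** M))"
    by (metis S matrix_mul_assoc)
  also have "\<dots> = M" by (metis X S matrix_mul_assoc)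
  finally show ?thesis by (simp add: g1_def)
qed

lemma mainR:
  assumes "X \<in> g1 (M ** R)" "\<exists>T. M ** R ** T = M"
  shows "R ** X \<in> g1 M"
proof -
  obtain T where T: "M ** R ** T = M" using assms by blast
  have X: "M ** R ** X ** (M ** R) = M ** R" using assms(1) by (simp add: g1_def)
  have "M ** (R ** X) ** M = (M ** R ** X ** (M ** R)) ** T"
    by (metis T matrix_mul_assoc)
  also have "\<dots> = M" by (metis X T matrix_mul_assoc)
  finally show ?thesis by (simp add: g1_def)
qed

lemma ls_g1: "K ** Q ** K = K \<Longrightarrow> M = K ** N \<Longrightarrow> \<exists>S. S ** Q ** M = M"
  by (metis matrix_mul_assoc)
lemma rs_g1: "K ** Q ** K = K \<Longrightarrow> M = N ** K \<Longrightarrow> \<exists>T. M ** Q ** T = M"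
  by (metis matrix_mul_assoc)
lemma ls_ct: fixes K :: "complex^'k^'m" shows "M = K ** N \<Longrightarrow> \<exists>S. S ** ctrans K ** M = M"
  using lsq[of K] by (metis matrix_mul_assoc)
lemma rs_ct: fixes K :: "complex^'k^'m" shows "M = N ** K \<Longrightarrow> \<exists>T. M ** ctrans K ** T = M"
  using rsq[of K] by (metis matrix_mul_assoc)
lemma ls_aa: fixes K :: "complex^'k^'m" shows "M = K ** N \<Longrightarrow> \<exists>S. S ** (K ** ctrans K) ** M = M"
  using lsq2[of K] by (metis matrix_mul_assoc)
lemma rs_aa: fixes K :: "complex^'k^'m" shows "M = N ** K \<Longrightarrow> \<exists>T. M ** (ctrans K ** K) ** T = M"
  using rsq2[of K] by (metis matrix_mul_assoc)



theorem theorem3p3: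
  fixes A :: "complex^'n^'m" and B :: "complex^'p^'n" and C :: "complex^'q^'p"
    and M :: "complex^'q^'m"
  assumes hM: "M = A ** B ** C"
  shows
   "({X ** A1 | A1 X. A1 \<in> g1 A \<and> X \<in> g1 (A1 ** M)} \<subseteq> g1 M)
  \<and> ({C1 ** X | C1 X. C1 \<in> g1 C \<and> X \<in> g1 (M ** C1)} \<subseteq> g1 M)
  \<and> ({X ** ctrans A | X. X \<in> g1 (ctrans A ** M)} \<subseteq> g1 M)
  \<and> ({ctrans C ** X | X. X \<in> g1 (M ** ctrans C)} \<subseteq> g1 M)
  \<and> ({X ** (A ** ctrans A) | X. X \<in> g1 (A ** ctrans A ** M)} \<subseteq> g1 M)
  \<and> ({ctrans C ** C ** X | X. X \<in> g1 (M ** ctrans C ** C)} \<subseteq> g1 M)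
  \<and> ({C1 ** X ** A1 | C1 A1 X. C1 \<in> g1 C \<and> A1 \<in> g1 A \<and> X \<in> g1 (A1 ** M ** C1)} \<subseteq> g1 M)
  \<and> ({ctrans C ** X ** ctrans A | X. X \<in> g1 (ctrans A ** M ** ctrans C)} \<subseteq> g1 M)
  \<and> ({X ** G | G X. G \<in> g1 (A ** B) \<and> X \<in> g1 (G ** M)} \<subseteq> g1 M)
  \<and> ({H ** X | H X. H \<in> g1 (B ** C) \<and> X \<in> g1 (M ** H)} \<subseteq> g1 M)
  \<and> ({X ** ctrans (A ** B) | X. X \<in> g1 (ctrans (A ** B) ** M)} \<subseteq> g1 M)
  \<and> ({ctrans (B ** C) ** X | X. X \<in> g1 (M ** ctrans (B ** C))} \<subseteq> g1 M)
  \<and> ({X ** G | B1 G X. B1 \<in> g1 B \<and> G \<in> g1 (A ** B ** B1) \<and> X \<in> g1 (G ** M)} \<subseteq> g1 M)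
  \<and> ({H ** X | B1 H X. B1 \<in> g1 B \<and> H \<in> g1 (B1 ** B ** C) \<and> X \<in> g1 (M ** H)} \<subseteq> g1 M)
  \<and> ({X ** G | G X. G \<in> g1 (A ** B ** ctrans B) \<and> X \<in> g1 (G ** M)} \<subseteq> g1 M)
  \<and> ({H ** X | H X. H \<in> g1 (ctrans B ** B ** C) \<and> X \<in> g1 (M ** H)} \<subseteq> g1 M)
  \<and> ({ctrans C ** C ** X ** (A ** ctrans A) | X.
       X \<in> g1 (A ** ctrans A ** M ** ctrans C ** C)} \<subseteq> g1 M)
  \<and> ({H ** X ** G | G H X. G \<in> g1 (A ** B) \<and> H \<in> g1 (B ** C) \<and> X \<in> g1 (G ** M ** H)}
       \<subseteq> g1 M)
  \<and> ({ctrans (B ** C) ** X ** ctrans (A ** B) | X.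
       X \<in> g1 (ctrans (A ** B) ** M ** ctrans (B ** C))} \<subseteq> g1 M)
  \<and> ({H ** X ** G | B1 G H X. B1 \<in> g1 B \<and> G \<in> g1 (A ** B ** B1) \<and>
       H \<in> g1 (B1 ** B ** C) \<and> X \<in> g1 (G ** M ** H)} \<subseteq> g1 M)
  \<and> ({H ** X ** G | G H X. G \<in> g1 (A ** B ** ctrans B) \<and> H \<in> g1 (ctrans B ** B ** C) \<and>
       X \<in> g1 (G ** M ** H)} \<subseteq> g1 M)
  \<and> ({ctrans (B1 ** B ** C) ** X ** ctrans (A ** B ** B1) | B1 X. B1 \<in> g1 B \<and>
       X \<in> g1 (ctrans (A ** B ** B1) ** M ** ctrans (B1 ** B ** C))} \<subseteq> g1 M)
  \<and> ({ctrans (ctrans B ** B ** C) ** X ** ctrans (A ** B ** ctrans B) | X.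
       X \<in> g1 (ctrans (A ** B ** ctrans B) ** M ** ctrans (ctrans B ** B ** C))} \<subseteq> g1 M)"
  proof -
  have BB: "\<exists>T. B ** ctrans B ** T = B" by (rule rsq)
  then obtain TB where TB: "B ** ctrans B ** TB = B" by blast
  obtain SB where SB: "SB ** (ctrans B ** B) = B" using lsq by blast
  have f13: "M = (A ** B ** B1) ** (B ** C)" if "B1 \<in> g1 B" for B1
    using that hM by (simp add: g1_def) (metis matrix_mul_assoc)
  have f14: "M = (A ** B) ** (B1 ** B ** C)" if "B1 \<in> g1 B" for B1
    using that hM by (simp add: g1_def) (metis matrix_mul_assoc)
  have f15: "M = (A ** B ** ctrans B) ** (TB ** C)"
    using TB hM by (metis matrix_mul_assoc)
  have f16: "M = (A ** SB) ** (ctrans B ** B ** C)"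
    using SB hM by (metis matrix_mul_assoc)
  have mA: "M = A ** (B ** C)" using hM by (simp add: matrix_mul_assoc)
  have mC: "M = (A ** B) ** C" using hM by simp
  have mAB: "M = (A ** B) ** C" using hM by simp
  have mBC: "M = A ** (B ** C)" using mA .
  have lA1: "\<exists>S. S ** A1 ** M = M" if "A1 \<in> g1 A" for A1
    using that mA by (intro ls_g1[of A]) (auto simp: g1_def)
  have rC1: "\<exists>T. M ** C1 ** T = M" if "C1 \<in> g1 C" for C1
    using that mC by (intro rs_g1[of C]) (auto simp: g1_def)
  have lAs: "\<exists>S. S ** ctrans A ** M = M" using mA by (rule ls_ct)
  have rCs: "\<exists>T. M ** ctrans C ** T = M" using mC by (rule rs_ct)
  have lAA: "\<exists>S. S ** (A ** ctrans A) ** M = M" using mA by (rule ls_aa)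
  have rCC: "\<exists>T. M ** (ctrans C ** C) ** T = M" using mC by (rule rs_aa)
  have lG: "\<exists>S. S ** G ** M = M" if "G \<in> g1 (A ** B)" for G
    using that mAB by (intro ls_g1[of "A ** B"]) (auto simp: g1_def)
  have rH: "\<exists>T. M ** H ** T = M" if "H \<in> g1 (B ** C)" for H
    using that mBC by (intro rs_g1[of "B ** C"]) (auto simp: g1_def)
  have lABs: "\<exists>S. S ** ctrans (A ** B) ** M = M" using mAB by (rule ls_ct)
  have rBCs: "\<exists>T. M ** ctrans (B ** C) ** T = M" using mBC by (rule rs_ct)
  have lG1: "\<exists>S. S ** G ** M = M" if "B1 \<in> g1 B" "G \<in> g1 (A ** B ** B1)" for B1 G
    using that f13[OF that(1)] by (intro ls_g1[of "A ** B ** B1"]) (auto simp: g1_def)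
  have rH1: "\<exists>T. M ** H ** T = M" if "B1 \<in> g1 B" "H \<in> g1 (B1 ** B ** C)" for B1 H
    using that f14[OF that(1)] by (intro rs_g1[of "B1 ** B ** C"]) (auto simp: g1_def)
  have lG2: "\<exists>S. S ** G ** M = M" if "G \<in> g1 (A ** B ** ctrans B)" for G
    using that f15 by (intro ls_g1[of "A ** B ** ctrans B"]) (auto simp: g1_def)
  have rH2: "\<exists>T. M ** H ** T = M" if "H \<in> g1 (ctrans B ** B ** C)" for H
    using that f16 by (intro rs_g1[of "ctrans B ** B ** C"]) (auto simp: g1_def)
  have lG1s: "\<exists>S. S ** ctrans (A ** B ** B1) ** M = M" if "B1 \<in> g1 B" for B1
    using f13[OF that] by (rule ls_ct)
  have rH1s: "\<exists>T. M ** ctrans (B1 ** B ** C) ** T = M" if "B1 \<in> g1 B" for B1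
    using f14[OF that] by (rule rs_ct)
  have lG2s: "\<exists>S. S ** ctrans (A ** B ** ctrans B) ** M = M"
    using f15 by (rule ls_ct)
  have rH2s: "\<exists>T. M ** ctrans (ctrans B ** B ** C) ** T = M"
    using f16 by (rule rs_ct)
  have as1: "g1 (M ** ctrans C ** C) = g1 (M ** (ctrans C ** C))" by (simp add: matrix_mul_assoc)
  have as2: "g1 (A ** ctrans A ** M ** ctrans C ** C) = g1 ((A ** ctrans A) ** M ** (ctrans C ** C))"
    by (simp add: matrix_mul_assoc)
  have as3: "ctrans C ** C ** X ** (A ** ctrans A) = (ctrans C ** C) ** X ** (A ** ctrans A)" for X
    by simp
  show ?thesis
    apply (intro conjI)
    subgoal by (auto simp: as1 as2 intro: mainL[OF _ lA1])
    subgoal by (auto simp: as1 as2 intro: mainR[OF _ rC1])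
    subgoal by (auto simp: as1 as2 intro: mainL[OF _ lAs])
    subgoal by (auto simp: as1 as2 intro: mainR[OF _ rCs])
    subgoal by (auto simp: as1 as2 intro: mainL[OF _ lAA])
    subgoal by (auto simp: as1 as2 intro: mainR[OF _ rCC])
    subgoal by (auto simp: as1 as2 intro: main2[OF _ lA1 rC1])
    subgoal by (auto simp: as1 as2 intro: main2[OF _ lAs rCs])
    subgoal by (auto simp: as1 as2 intro: mainL[OF _ lG])
    subgoal by (auto simp: as1 as2 intro: mainR[OF _ rH])
    subgoal by (auto simp: as1 as2 intro: mainL[OF _ lABs])
    subgoal by (auto simp: as1 as2 intro: mainR[OF _ rBCs])
    subgoal by (auto simp: as1 as2 intro: mainL[OF _ lG1])
    subgoal by (auto simp: as1 as2 intro: mainR[OF _ rH1])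
    subgoal by (auto simp: as1 as2 intro: mainL[OF _ lG2])
    subgoal by (auto simp: as1 as2 intro: mainR[OF _ rH2])
    subgoal by (auto simp: as1 as2 intro: main2[OF _ lAA rCC])
    subgoal by (auto simp: as1 as2 intro: main2[OF _ lG rH])
    subgoal by (auto simp: as1 as2 intro: main2[OF _ lABs rBCs])
    subgoal by (auto simp: as1 as2 intro: main2[OF _ lG1 rH1])
    subgoal by (auto simp: as1 as2 intro: main2[OF _ lG2 rH2])
    subgoal by (auto simp: as1 as2 intro: main2[OF _ lG1s rH1s])
    subgoal by (auto simp: as1 as2 intro: main2[OF _ lG2s rH2s])
    done
qed

end
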